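(* For every integer $n\ge 1$, the resistance distance in the ladder graph $L_n$ (unit edge resistances) satisfies \[ r_{L_n}(1,2)=r_{L_n}(2n-1,2n)=\frac{(2+\sqrt3)^n(\sqrt3-1)+(2-\sqrt3)^n(\sqrt3+1)}{(2+\sqrt3)^n-(2-\sqrt3)^n}. \]
   Context: The ladder graph $L_n$ has vertex set $\{1,\dots,2n\}$ and edges $\{2k-1,2k\}$ for $k=1,\dots,n$, together with $\{2k-1,2k+1\}$ and $\{2k,2k+2\}$ for $k=1,\dots,n-1$; each edge has resistance $1$. The resistance distance $r_G(u,v)$ is the potential difference between $u$ and $v$ when one unit of current enters at $u$ and leaves at $v$; equivalently $r_G(u,v)=(\mathbf e_u-\mathbf e_v)^T L^\dagger(\mathbf e_u-\mathbf e_v)$ with $L$ the combinatorial Laplacian of $G$. *)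

theory Defs
  imports Complex_Main
begin

text \<open>Graphs on the vertex set {1..N}, given by a symmetric irreflexive
adjacency relation E; every edge has unit resistance.\<close>

definition ladder_edge :: "nat \<Rightarrow> nat \<Rightarrow> nat \<Rightarrow> bool" where
  "ladder_edge n a b \<longleftrightarrow>
     (\<exists>k\<in>{1..n}. {a, b} = {2*k - 1, 2*k}) \<or>
     (\<exists>k\<in>{1..<n}. {a, b} = {2*k - 1, 2*k + 1} \<or> {a, b} = {2*k, 2*k + 2})"

definition laplacian :: "(nat \<Rightarrow> nat \<Rightarrow> bool) \<Rightarrow> nat \<Rightarrow> nat \<Rightarrow> nat \<Rightarrow> real" where
  "laplacian E N i j =
     (if i = j then real (card {k\<in>{1..N}. E i k}) else if E i j then -1 else 0)"

text \<open>A potential x realises unit current entering at u and leaving at v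
  iff L x = e_u - e_v (Kirchhoff/Ohm).\<close>
definition is_potential :: "(nat \<Rightarrow> nat \<Rightarrow> bool) \<Rightarrow> nat \<Rightarrow> nat \<Rightarrow> nat \<Rightarrow> (nat \<Rightarrow> real) \<Rightarrow> bool" where
  "is_potential E N u v x \<longleftrightarrow>
     (\<forall>i\<in>{1..N}. (\<Sum>j=1..N. laplacian E N i j * x j) =
        (if i = u then 1 else 0) - (if i = v then 1 else 0))"

text \<open>Resistance distance: potential difference between u and v
  (well defined for a connected graph).\<close>
definition resistance :: "(nat \<Rightarrow> nat \<Rightarrow> bool) \<Rightarrow> nat \<Rightarrow> nat \<Rightarrow> nat \<Rightarrow> real" where
  "resistance E N u v = (let x = (SOME x. is_potential E N u v x) in x u - x v)"

end

theory Submission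
  imports Defs
begin

lemma ladder_edge_iff: "ladder_edge n a b \<longleftrightarrow> 1 \<le> min a b \<and> max a b \<le> 2*n \<and>
   ((b = a+1 \<and> odd a) \<or> (a = b+1 \<and> odd b) \<or> b = a+2 \<or> a = b+2)"
proof
  assume "ladder_edge n a b"
  then show "1 \<le> min a b \<and> max a b \<le> 2*n \<and>
   ((b = a+1 \<and> odd a) \<or> (a = b+1 \<and> odd b) \<or> b = a+2 \<or> a = b+2)"
    unfolding ladder_edge_def by (auto simp: doubleton_eq_iff; presburger)
next
  assume h: "1 \<le> min a b \<and> max a b \<le> 2*n \<and>
   ((b = a+1 \<and> odd a) \<or> (a = b+1 \<and> odd b) \<or> b = a+2 \<or> a = b+2)"
  have "(\<exists>k\<in>{1..n}. {a, b} = {2*k - 1, 2*k}) \<or>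
     (\<exists>k\<in>{1..<n}. {a, b} = {2*k - 1, 2*k + 1} \<or> {a, b} = {2*k, 2*k + 2})"
  proof (cases "(b = a+1 \<and> odd a) \<or> (a = b+1 \<and> odd b)")
    case True
    then consider "b = a+1 \<and> odd a" | "a = b+1 \<and> odd b" by blast
    then show ?thesis
    proof cases
      case 1
      show ?thesis by (rule disjI1, rule bexI[of _ "(a+1) div 2"]) (use h 1 in \<open>auto simp: doubleton_eq_iff elim!: oddE\<close>)
    next
      case 2
      show ?thesis by (rule disjI1, rule bexI[of _ "(b+1) div 2"]) (use h 2 in \<open>auto simp: doubleton_eq_iff elim!: oddE\<close>)
    qed
  next
    case False
    then have c: "b = a+2 \<or> a = b+2" using h by blast
    show ?thesis
    proof (rule disjI2)
      show "\<exists>k\<in>{1..<n}. {a, b} = {2*k - 1, 2*k + 1} \<or> {a, b} = {2*k, 2*k + 2}"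
      proof (cases "odd (min a b)")
        case True
        show ?thesis by (rule bexI[of _ "(min a b + 1) div 2"]) (use h c True in \<open>auto simp: doubleton_eq_iff elim!: oddE\<close>)
      next
        case False
        show ?thesis by (rule bexI[of _ "min a b div 2"]) (use h c False in \<open>auto simp: doubleton_eq_iff elim!: evenE\<close>)
      qed
    qed
  qed
  then show "ladder_edge n a b" unfolding ladder_edge_def .
qed

lemma lap_sum:
  assumes irr: "\<And>a. \<not> E a a" and i: "i \<in> {1..N}"
  shows "(\<Sum>j=1..N. laplacian E N i j * y j) = (\<Sum>j\<in>{k\<in>{1..N}. E i k}. y i - y j)"
proof -
  let ?S = "{k\<in>{1..N}. E i k}"
  have fin: "finite ?S" by simp
  have "(\<Sum>j=1..N. laplacian E N i j * y j) = laplacian E N i i * y i + (\<Sum>j\<in>{1..N}-{i}. laplacian E N i j * y j)"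
    using i by (simp add: sum.remove)
  also have "(\<Sum>j\<in>{1..N}-{i}. laplacian E N i j * y j) = (\<Sum>j\<in>{1..N}-{i}. if E i j then - y j else 0)"
    by (rule sum.cong) (auto simp: laplacian_def)
  also have "\<dots> = (\<Sum>j\<in>?S. - y j)"
    using irr by (simp add: sum.If_cases) (rule sum.cong, auto)
  finally show ?thesis
    by (simp add: laplacian_def sum_subtractf sum_negf)
qed

lemma irr_ladder: "\<not> ladder_edge n a a"
  by (simp add: ladder_edge_iff)

lemma nb_odd:
  assumes "1 \<le> k" "k \<le> n"
  shows "{j\<in>{1..2*n}. ladder_edge n (2*k-1) j} =
     {2*k} \<union> (if 1 < k then {2*k-3} else {}) \<union> (if k < n then {2*k+1} else {})"
  using assms by (auto simp: ladder_edge_iff split: if_splits; presburger)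

lemma nb_even:
  assumes "1 \<le> k" "k \<le> n"
  shows "{j\<in>{1..2*n}. ladder_edge n (2*k) j} =
     {2*k-1} \<union> (if 1 < k then {2*k-2} else {}) \<union> (if k < n then {2*k+2} else {})"
  using assms by (auto simp: ladder_edge_iff split: if_splits; presburger)

definition Lsum :: "nat \<Rightarrow> (nat \<Rightarrow> real) \<Rightarrow> nat \<Rightarrow> real" where
  "Lsum n y i = (\<Sum>j=1..2*n. laplacian (ladder_edge n) (2*n) i j * y j)"

lemma vert_odd:
  assumes "1 \<le> k" "k \<le> n"
  shows "Lsum n y (2*k-1) = (y(2*k-1) - y(2*k)) + (if 1<k then y(2*k-1) - y(2*k-3) else 0)
     + (if k<n then y(2*k-1) - y(2*k+1) else 0)" (is "_ = ?R")
proof -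
  have "Lsum n y (2*k-1) = (\<Sum>j\<in>{j\<in>{1..2*n}. ladder_edge n (2*k-1) j}. y (2*k-1) - y j)"
    unfolding Lsum_def by (rule lap_sum) (use assms irr_ladder in auto)
  also have "\<dots> = (\<Sum>j\<in>{2*k} \<union> (if 1 < k then {2*k-3} else {}) \<union> (if k < n then {2*k+1} else {}). y (2*k-1) - y j)"
    using nb_odd[OF assms] by simp
  also have "\<dots> = ?R" using assms by (cases "1<k"; cases "k<n") auto
  finally show ?thesis .
qed

lemma vert_even:
  assumes "1 \<le> k" "k \<le> n"
  shows "Lsum n y (2*k) = (y(2*k) - y(2*k-1)) + (if 1<k then y(2*k) - y(2*k-2) else 0)
     + (if k<n then y(2*k) - y(2*k+2) else 0)" (is "_ = ?R")
proof -
  have d: "2*k-2 \<noteq> 2*k-1" "2*k+2 \<noteq> 2*k-2" "2*k+2 \<noteq> 2*k-1" using assms by auto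
  have "Lsum n y (2*k) = (\<Sum>j\<in>{j\<in>{1..2*n}. ladder_edge n (2*k) j}. y (2*k) - y j)"
    unfolding Lsum_def by (rule lap_sum) (use assms irr_ladder in auto)
  also have "\<dots> = (\<Sum>j\<in>{2*k-1} \<union> (if 1 < k then {2*k-2} else {}) \<union> (if k < n then {2*k+2} else {}). y (2*k) - y j)"
    using nb_even[OF assms] by simp
  also have "\<dots> = ?R" using assms d by (cases "1<k"; cases "k<n") auto
  finally show ?thesis .
qed

lemma dseq_pos_False:
  fixes d :: "nat \<Rightarrow> real"
  assumes n: "1 \<le> n"
    and eq: "\<And>k. 1\<le>k \<Longrightarrow> k\<le>n \<Longrightarrow> 2*d k + (if 1<k then d k - d(k-1) else 0) + (if k<n then d k - d(k+1) else 0) = 0"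
    and p: "d 1 > 0"
  shows False
proof -
  have "\<forall>k. 1\<le>k \<longrightarrow> k\<le>n \<longrightarrow> 0 < d k \<and> (1<k \<longrightarrow> d(k-1) < d k)"
  proof
    fix k show "1\<le>k \<longrightarrow> k\<le>n \<longrightarrow> 0 < d k \<and> (1<k \<longrightarrow> d(k-1) < d k)"
    proof (induction k)
      case 0 then show ?case by simp
    next
      case (Suc k)
      show ?case
      proof (cases "k = 0")
        case True then show ?thesis using p by simp
      next
        case False
        show ?thesis
        proof (intro impI)
          assume "Suc k \<le> n"
          then have ih: "0 < d k" "1<k \<longrightarrow> d(k-1) < d k" using Suc False by auto
          have e: "2*d k + (if 1<k then d k - d(k-1) else 0) + (d k - d(k+1)) = 0"
            using eq[of k] False \<open>Suc k \<le> n\<close> by simp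
          have "(if 1<k then d k - d(k-1) else 0) \<ge> 0" using ih by auto
          then show "0 < d (Suc k) \<and> (1 < Suc k \<longrightarrow> d (Suc k - 1) < d (Suc k))"
            using e ih by auto
        qed
      qed
    qed
  qed
  then have a: "0 < d n" "1<n \<longrightarrow> d(n-1) < d n" using n by auto
  have "2*d n + (if 1<n then d n - d(n-1) else 0) = 0" using eq[of n] n by simp
  moreover have "(if 1<n then d n - d(n-1) else 0) \<ge> 0" using a by auto
  ultimately show False using a by linarith
qed

lemma dseq_zero:
  fixes d :: "nat \<Rightarrow> real"
  assumes n: "1 \<le> n"
    and eq: "\<And>k. 1\<le>k \<Longrightarrow> k\<le>n \<Longrightarrow> 2*d k + (if 1<k then d k - d(k-1) else 0) + (if k<n then d k - d(k+1) else 0) = 0"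
  shows "\<And>k. 1\<le>k \<Longrightarrow> k\<le>n \<Longrightarrow> d k = 0"
proof -
  have d1: "d 1 = 0"
  proof (rule ccontr)
    assume "d 1 \<noteq> 0"
    then consider "d 1 > 0" | "d 1 < 0" by linarith
    then show False
    proof cases
      case 1 then show False using dseq_pos_False[OF n eq] by blast
    next
      case 2
      have "(\<lambda>k. - d k) 1 > 0" using 2 by simp
      moreover have "\<And>k. 1\<le>k \<Longrightarrow> k\<le>n \<Longrightarrow> 2*(- d k) + (if 1<k then (- d k) - (- d(k-1)) else 0) + (if k<n then (- d k) - (- d(k+1)) else 0) = 0"
      proof -
        fix k assume "1\<le>k" "k\<le>n"
        from eq[OF this] show "2*(- d k) + (if 1<k then (- d k) - (- d(k-1)) else 0) + (if k<n then (- d k) - (- d(k+1)) else 0) = 0"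
          by (auto split: if_splits)
      qed
      ultimately show False using dseq_pos_False[OF n, of "\<lambda>k. - d k"] by blast
    qed
  qed
  have "\<forall>k. 1\<le>k \<longrightarrow> k\<le>n \<longrightarrow> d k = 0 \<and> (1<k \<longrightarrow> d(k-1) = 0)"
  proof
    fix k show "1\<le>k \<longrightarrow> k\<le>n \<longrightarrow> d k = 0 \<and> (1<k \<longrightarrow> d(k-1) = 0)"
    proof (induction k)
      case 0 then show ?case by simp
    next
      case (Suc k)
      show ?case
      proof (cases "k = 0")
        case True then show ?thesis using d1 by simp
      next
        case False
        show ?thesis
        proof (intro impI)
          assume "Suc k \<le> n"
          then have ih: "d k = 0" "1<k \<longrightarrow> d(k-1) = 0" using Suc False by auto
          have e: "2*d k + (if 1<k then d k - d(k-1) else 0) + (d k - d(k+1)) = 0"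
            using eq[of k] False \<open>Suc k \<le> n\<close> by simp
          then show "d (Suc k) = 0 \<and> (1 < Suc k \<longrightarrow> d (Suc k - 1) = 0)"
            using ih by (auto split: if_splits)
        qed
      qed
    qed
  qed
  then show "\<And>k. 1\<le>k \<Longrightarrow> k\<le>n \<Longrightarrow> d k = 0" by blast
qed

lemma vertex_cases:
  fixes i n :: nat
  assumes "i \<in> {1..2*n}"
  obtains k where "1 \<le> k" "k \<le> n" "i = 2*k-1" | k where "1 \<le> k" "k \<le> n" "i = 2*k"
proof (cases "odd i")
  case True
  then show ?thesis using that(1)[of "(i+1) div 2"] assms by (auto elim!: oddE)
next
  case False
  then show ?thesis using that(2)[of "i div 2"] assms by (auto elim!: evenE)
qed

lemma Lsum_diff: "Lsum n (\<lambda>i. x i - x' i) i = Lsum n x i - Lsum n x' i"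
  unfolding Lsum_def by (simp add: right_diff_distrib sum_subtractf)

lemma pot_unique:
  assumes n: "1 \<le> n"
    and px: "is_potential (ladder_edge n) (2*n) u v x"
    and px': "is_potential (ladder_edge n) (2*n) u v x'"
    and k: "1 \<le> k" "k \<le> n"
  shows "x (2*k-1) - x (2*k) = x' (2*k-1) - x' (2*k)"
proof -
  define y where "y = (\<lambda>i. x i - x' i)"
  have y0: "Lsum n y i = 0" if "i \<in> {1..2*n}" for i
    using px px' that unfolding y_def Lsum_diff by (simp add: is_potential_def Lsum_def)
  define d where "d = (\<lambda>k. y (2*k-1) - y (2*k))"
  have "d k = 0"
  proof (rule dseq_zero[OF n _ k])
    fix k :: nat assume k: "1\<le>k" "k\<le>n"
    have o: "Lsum n y (2*k-1) = 0" by (rule y0) (use k in auto)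
    have e: "Lsum n y (2*k) = 0" by (rule y0) (use k in auto)
    have a1: "1 < k \<Longrightarrow> d (k-1) = y (2*k-3) - y(2*k-2)" unfolding d_def
      by (simp add: right_diff_distrib')
    have a2: "d (k+1) = y (2*k+1) - y(2*k+2)" unfolding d_def by simp
    show "2*d k + (if 1<k then d k - d(k-1) else 0) + (if k<n then d k - d(k+1) else 0) = 0"
      using o e vert_odd[OF k, of y] vert_even[OF k, of y] a1 a2
      unfolding d_def by (auto split: if_splits)
  qed
  then show ?thesis unfolding d_def y_def by simp
qed

definition al :: real where "al = 2 + sqrt 3"
definition be :: real where "be = 2 - sqrt 3"
definition h :: "nat \<Rightarrow> real" where "h j = al^(j+1) + be^j"

lemma al_sq: "al^2 = 4*al - 1" unfolding al_def by (simp add: power2_eq_square algebra_simps)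
lemma be_sq: "be^2 = 4*be - 1" unfolding be_def by (simp add: power2_eq_square algebra_simps)
lemma al_be: "al * be = 1" unfolding al_def be_def by (simp add: algebra_simps)

lemma h_rec: "h (j+2) = 4*h(j+1) - h j"
proof -
  have e1: "al^(j+3) = al^(j+1)*al^2" proof - have "j+3 = (j+1)+2" by simp then show ?thesis by (simp only: power_add) qed
  have e2: "be^(j+2) = be^j*be^2" by (simp only: power_add)
  have e3: "al^(j+2) = al^(j+1)*al" proof - have "j+2 = (j+1)+1" by simp then show ?thesis by (simp only: power_add power_one_right) qed
  have e4: "be^(j+1) = be^j*be" by (simp only: power_add power_one_right)
  have "h (j+2) = al^(j+3) + be^(j+2)" unfolding h_def by (simp add: numeral_3_eq_3)
  also have "\<dots> = al^(j+1)*(4*al-1) + be^j*(4*be-1)" unfolding e1 e2 al_sq be_sq ..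
  also have "\<dots> = 4*(al^(j+1)*al + be^j*be) - (al^(j+1) + be^j)" by (simp add: algebra_simps)
  also have "\<dots> = 4*h(j+1) - h j" unfolding h_def e3[symmetric] e4[symmetric] by (simp add: numeral_2_eq_2)
  finally show ?thesis .
qed

lemma h1: "h 1 = 3 * h 0"
  unfolding h_def using al_sq unfolding al_def be_def by (simp add: power2_eq_square algebra_simps)

lemma hkey:
  assumes "j \<le> m"
  shows "2*h j + (if j<m then h j - h(j+1) else 0) + (if 0<j then h j - h(j-1) else 0)
       = (if j=m then h(m+1) - h m else 0)"
proof (cases j)
  case 0 then show ?thesis using h1 by auto
next
  case (Suc i)
  have "h (i+2) = 4*h(i+1) - h i" by (rule h_rec)
  then show ?thesis using Suc assms by auto
qed

lemma h_gap: "h (m+1) - h m \<ge> 2"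
proof -
  have b0: "0 \<le> be" "be \<le> 1" unfolding be_def by (auto simp: real_le_lsqrt)
  have a1: "1 \<le> al" unfolding al_def by simp
  have "be^m \<le> 1" using b0 by (simp add: power_le_one)
  have "1 \<le> al^(m+1)" using a1 by (rule one_le_power)
  have "h (m+1) - h m = al^(m+1)*(al - 1) + be^m * (be - 1)"
    unfolding h_def by (simp add: algebra_simps)
  also have "\<dots> \<ge> 1 * (al - 1) + 1 * (be - 1)"
  proof -
    have "al^(m+1)*(al - 1) \<ge> 1*(al-1)" using \<open>1 \<le> al^(m+1)\<close> a1 by (intro mult_right_mono) auto
    moreover have "be^m * (be - 1) \<ge> 1 * (be - 1)" using \<open>be^m \<le> 1\<close> b0
      by (intro mult_right_mono_neg) auto
    ultimately show ?thesis by linarith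
  qed
  finally show ?thesis unfolding al_def be_def by simp
qed

lemma ident: fixes A B s :: real assumes "A*B = 1" "s^2 = 3"
  shows "2*((2+s)*A + B)*((2+s)*A - (2-s)*B) = (((2+s)^2*A + (2-s)*B) - ((2+s)*A+B)) * ((2+s)*A*(s-1) + (2-s)*B*(s+1))"
  using assms by algebra

lemma seq_potential:
  fixes c :: "nat \<Rightarrow> real"
  assumes eq: "\<And>k. 1\<le>k \<Longrightarrow> k\<le>n \<Longrightarrow> 2*c k + (if 1<k then c k - c(k-1) else 0) + (if k<n then c k - c(k+1) else 0)
        = (if 2*k-1 = u then 1 else 0) - (if 2*k-1 = v then 1 else 0)"
    and eq2: "\<And>k. 1\<le>k \<Longrightarrow> k\<le>n \<Longrightarrow> (if 2*k = u then 1 else 0) - (if 2*k = v then 1 else 0)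
        = - ((if 2*k-1 = u then 1 else 0) - (if 2*k-1 = v then (1::real) else 0))"
  shows "is_potential (ladder_edge n) (2*n) u v (\<lambda>i. if odd i then c ((i+1) div 2) else - c (i div 2))"
proof -
  define x where "x = (\<lambda>i. if odd i then c ((i+1) div 2) else - c (i div 2))"
  have xo: "x (2*k-1) = c k" if "1 \<le> k" for k using that unfolding x_def by (auto elim!: oddE)
  have xe: "x (2*k) = - c k" for k unfolding x_def by simp
  have xo1: "x (2*k-3) = c (k-1)" if "1 < k" for k
  proof -
    have "2*k-3 = 2*(k-1)-1" using that by simp
    then show ?thesis using xo[of "k-1"] that by simp
  qed
  have xo2: "x (2*k+1) = c (k+1)" for k using xo[of "k+1"] by simp
  have xe1: "x (2*k-2) = - c (k-1)" for k using xe[of "k-1"] by (simp add: right_diff_distrib')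
  have xe2: "x (2*k+2) = - c (k+1)" for k using xe[of "k+1"] by simp
  have "Lsum n x i = (if i = u then 1 else 0) - (if i = v then 1 else 0)" if i: "i \<in> {1..2*n}" for i
  proof (rule vertex_cases[OF i])
    fix k assume k: "1 \<le> k" "k \<le> n" "i = 2*k-1"
    show ?thesis using vert_odd[OF k(1,2), of x] eq[OF k(1,2)] xo[OF k(1)] xe xo1 xo2 k(3)
      by (auto split: if_splits)
  next
    fix k assume k: "1 \<le> k" "k \<le> n" "i = 2*k"
    show ?thesis using vert_even[OF k(1,2), of x] eq[OF k(1,2)] eq2[OF k(1,2)] xo[OF k(1)] xe xe1 xe2 k(3)
      by (auto split: if_splits)
  qed
  then show ?thesis unfolding is_potential_def Lsum_def x_def by blast
qed

lemma res_from_pot: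
  assumes n: "1 \<le> n" and k: "1 \<le> k" "k \<le> n"
    and p0: "is_potential (ladder_edge n) (2*n) (2*k-1) (2*k) x0"
  shows "resistance (ladder_edge n) (2*n) (2*k-1) (2*k) = x0 (2*k-1) - x0 (2*k)"
proof -
  define x where "x = (SOME x. is_potential (ladder_edge n) (2*n) (2*k-1) (2*k) x)"
  have "is_potential (ladder_edge n) (2*n) (2*k-1) (2*k) x" unfolding x_def using p0 by (metis someI)
  from pot_unique[OF n this p0 k] show ?thesis unfolding resistance_def x_def[symmetric] Let_def .
qed

lemma final_value:
  assumes n: "1 \<le> n"
  shows "2 * h (n-1) / (h n - h (n-1)) =
     ((2 + sqrt 3)^n * (sqrt 3 - 1) + (2 - sqrt 3)^n * (sqrt 3 + 1)) /
           ((2 + sqrt 3)^n - (2 - sqrt 3)^n)"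
proof -
  obtain m where m: "n = m+1" using n by (metis add.commute le_add_diff_inverse)
  define A where "A = al^m"
  define B where "B = be^m"
  have AB: "A*B = 1" unfolding A_def B_def by (simp add: al_be flip: power_mult_distrib)
  have s3: "sqrt 3 ^ 2 = (3::real)" by simp
  have hm: "h (n-1) = al*A + B" unfolding h_def A_def B_def m by simp
  have hn: "h n = al^2*A + be*B" unfolding h_def A_def B_def m by (simp add: power2_eq_square)
  have an: "(2 + sqrt 3)^n = al*A" "(2 - sqrt 3)^n = be*B" unfolding A_def B_def m al_def be_def by simp_all
  have D: "h n - h (n-1) \<noteq> 0" using h_gap[of "n-1"] n by simp
  have b0: "0 \<le> be" "be < 1" unfolding be_def by (auto simp: real_le_lsqrt)
  have "be^n < 1" using b0 n by (simp add: power_less_one_iff)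
  moreover have "1 \<le> al^n" unfolding al_def by (rule one_le_power) simp
  ultimately have Den: "al*A - be*B \<noteq> 0" using an unfolding al_def be_def by simp
  have I: "2*(al*A + B)*(al*A - be*B) = ((al^2*A + be*B) - (al*A+B)) * (al*A*(sqrt 3-1) + be*B*(sqrt 3+1))"
    unfolding al_def be_def by (rule ident[OF AB s3])
  show ?thesis unfolding hm hn an using D Den I hm hn
    by (simp add: divide_eq_eq field_simps)
qed

theorem mainTheorem4:
  fixes n :: nat
  assumes "n \<ge> 1"
  shows "resistance (ladder_edge n) (2*n) 1 2 =
           ((2 + sqrt 3)^n * (sqrt 3 - 1) + (2 - sqrt 3)^n * (sqrt 3 + 1)) /
           ((2 + sqrt 3)^n - (2 - sqrt 3)^n)
       \<and> resistance (ladder_edge n) (2*n) (2*n - 1) (2*n) =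
           ((2 + sqrt 3)^n * (sqrt 3 - 1) + (2 - sqrt 3)^n * (sqrt 3 + 1)) /
           ((2 + sqrt 3)^n - (2 - sqrt 3)^n)"
proof -
  note n = assms
  define D where "D = h n - h (n-1)"
  have D0: "D \<noteq> 0" unfolding D_def using h_gap[of "n-1"] n by simp
  define p where "p = 1 / D"
  define c1 where "c1 = (\<lambda>k. p * h (n-k))"
  define c2 where "c2 = (\<lambda>k. p * h (k-1))"
  have hk: "2*h j + (if j<n-1 then h j - h(j+1) else 0) + (if 0<j then h j - h(j-1) else 0)
       = (if j=n-1 then D else 0)" if "j \<le> n-1" for j
    using hkey[OF that] n unfolding D_def by simp
  have eq1: "2*c1 k + (if 1<k then c1 k - c1(k-1) else 0) + (if k<n then c1 k - c1(k+1) else 0)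
        = (if 2*k-1 = 1 then 1 else 0) - (if 2*k-1 = 2 then 1 else 0)" if k: "1\<le>k" "k\<le>n" for k
  proof -
    have H: "2*h (n-k) + (if n-k<n-1 then h (n-k) - h(n-k+1) else 0) + (if 0<n-k then h (n-k) - h(n-k-1) else 0)
       = (if n-k=n-1 then D else 0)" by (rule hk) (use k in simp)
    have a: "(n-k<n-1) = (1<k)" "(0<n-k) = (k<n)" "(n-k = n-1) = (k=1)" using k by auto
    have b: "Suc n - k = Suc (n-k)" "n-(k-1) = Suc (n-k)" "n-k-1 = n-(k+1)" using k by auto
    have "2*c1 k + (if 1<k then c1 k - c1(k-1) else 0) + (if k<n then c1 k - c1(k+1) else 0)
        = p * (if k=1 then D else 0)"
      using H unfolding a c1_def by (cases "1<k"; cases "k<n") (auto simp: b algebra_simps)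
    then show ?thesis using D0 k unfolding p_def by auto
  qed
  have eq2: "2*c2 k + (if 1<k then c2 k - c2(k-1) else 0) + (if k<n then c2 k - c2(k+1) else 0)
        = (if 2*k-1 = 2*n-1 then 1 else 0) - (if 2*k-1 = 2*n then 1 else 0)" if k: "1\<le>k" "k\<le>n" for k
  proof -
    have H: "2*h (k-1) + (if k-1<n-1 then h (k-1) - h(k-1+1) else 0) + (if 0<k-1 then h (k-1) - h(k-1-1) else 0)
       = (if k-1=n-1 then D else 0)" by (rule hk) (use k in simp)
    have a: "(k-1<n-1) = (k<n)" "(0<k-1) = (1<k)" "(k-1 = n-1) = (k=n)" using k by auto
    have b: "k-1+1 = k+1-1" "k-1-1 = k-1-1" using k by auto
    have "2*c2 k + (if 1<k then c2 k - c2(k-1) else 0) + (if k<n then c2 k - c2(k+1) else 0)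
        = p * (if k=n then D else 0)"
      using H unfolding a c2_def using k by (cases "1<k"; cases "k<n") (auto simp: algebra_simps)
    then show ?thesis using D0 k n unfolding p_def by auto
  qed
  have P1: "is_potential (ladder_edge n) (2*n) 1 2 (\<lambda>i. if odd i then c1 ((i+1) div 2) else - c1 (i div 2))"
    by (rule seq_potential) (use eq1 in auto)
  have P2: "is_potential (ladder_edge n) (2*n) (2*n-1) (2*n) (\<lambda>i. if odd i then c2 ((i+1) div 2) else - c2 (i div 2))"
    by (rule seq_potential) (use eq2 n in auto)
  have R1: "resistance (ladder_edge n) (2*n) 1 2 = 2 * c1 1"
    using res_from_pot[OF n _ _, of 1] P1 n by simp
  have R2: "resistance (ladder_edge n) (2*n) (2*n-1) (2*n) = 2 * c2 n"
    using res_from_pot[OF n _ _, of n] P2 n by (simp add: odd_pos)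
  have V: "2 * c1 1 = 2 * h (n-1) / (h n - h (n-1))" "2 * c2 n = 2 * h (n-1) / (h n - h (n-1))"
    unfolding c1_def c2_def p_def D_def by simp_all
  show ?thesis using R1 R2 V final_value[OF n] by simp
qed

end
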